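(* Let $q=p^e$ with $p$ prime, $e\ge1$, and $0\le s<e$. For $i=1,2$ let $C_i$ be an $[n,k_i,d_i]_q$ linear code over $\mathbb{F}_q$ with generator matrix $G_i$ and parity-check matrix $H_i$. Suppose $k_1+k_2\ge n$ and that either $$\mathrm{rk}\begin{pmatrix}G_1\\ H_2^{(p^{e-s})}\end{pmatrix}\le k_1\quad\text{or}\quad \mathrm{rk}\big(G_1(G_2^{(p^{e-s})})^T\big)=k_1-\dim_{\mathbb{F}_q}(C_1\cap C_2^{\perp_s})\le k_1+k_2-n.$$ Then there exists a quantum code with parameters $[[n,k_1+k_2-n,d]]_q$ with $d\ge\min\{d_1,d_2\}$.
   Context: For a matrix $A=(a_{ij})$ over $\mathbb{F}_q$, $A^{(p^{e-s})}=(a_{ij}^{p^{e-s}})$ (entrywise power), and $A^T$ is the transpose. For $\mathbf{x},\mathbf{y}\in\mathbb{F}_q^n$ the $s$-Galois form is $[\mathbf{x},\mathbf{y}]_s=\sum_{i=1}^n x_iy_i^{p^s}$; for a code $C$, $C^{\perp_s}=\{\mathbf{x}\in\mathbb{F}_q^n: [\mathbf{c},\mathbf{x}]_s=0\ \forall \mathbf{c}\in C\}$. Quantum codes: let $V_n=(\mathbb{C}^q)^{\otimes n}$ with orthonormal basis $\{|\mathbf{c}\rangle:\mathbf{c}\in\mathbb{F}_q^n\}$. For $a,b\in\mathbb{F}_q$ define $X(a)|x\rangle=|x+a\rangle$, $Z(b)|x\rangle=\omega^{\mathrm{tr}(bx)}|x\rangle$ with $\omega=e^{2\pi i/p}$ and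 $\mathrm{tr}:\mathbb{F}_q\to\mathbb{F}_p$ the trace; for $\mathbf{a},\mathbf{b}\in\mathbb{F}_q^n$ let $X(\mathbf{a})=\bigotimes_i X(a_i)$, $Z(\mathbf{b})=\bigotimes_i Z(b_i)$. The error group is $G_n=\{\omega^cX(\mathbf{a})Z(\mathbf{b})\}$, and the weight of $\omega^cX(\mathbf{a})Z(\mathbf{b})$ is the number of $i$ with $(a_i,b_i)\ne(0,0)$. A quantum code with parameters $[[n,k,d]]_q$ is a subspace $Q\subseteq V_n$ of dimension $q^k$ with minimum distance $d$: for all $|u\rangle,|v\rangle\in Q$ with $\langle u|v\rangle=0$ and every $E\in G_n$ of weight at most $d-1$, $\langle u|E|v\rangle=0$ (with the standard purity-based convention when $k=0$). *)

theory Defs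
  imports "Jordan_Normal_Form.DL_Rank" "HOL-Library.Function_Algebras" Complex_Main
begin

definition mat_rank :: "'a::field mat \<Rightarrow> nat" where
  "mat_rank A = vec_space.rank (dim_row A) A"

definition fdim :: "nat \<Rightarrow> 'a::field vec set \<Rightarrow> nat" where
  "fdim n S = vectorspace.dim class_ring ((module_vec TYPE('a) n)\<lparr>carrier := S\<rparr>)"

definition is_fsubspace :: "nat \<Rightarrow> 'a::field vec set \<Rightarrow> bool" where
  "is_fsubspace n S = subspace class_ring S (module_vec TYPE('a) n)"

definition hweight :: "'a::zero vec \<Rightarrow> nat" where
  "hweight x = card {i. i < dim_vec x \<and> x $ i \<noteq> 0}"

definition lin_code :: "nat \<Rightarrow> nat \<Rightarrow> nat \<Rightarrow> 'a::{finite,field} vec set \<Rightarrow> bool" where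
  "lin_code n k d C \<longleftrightarrow> is_fsubspace n C \<and> fdim n C = k \<and>
     (\<forall>c\<in>C. c \<noteq> 0\<^sub>v n \<longrightarrow> d \<le> hweight c) \<and> (\<exists>c\<in>C. c \<noteq> 0\<^sub>v n \<and> hweight c = d)"

definition is_gen_matrix :: "nat \<Rightarrow> nat \<Rightarrow> 'a::field vec set \<Rightarrow> 'a mat \<Rightarrow> bool" where
  "is_gen_matrix n k C G \<longleftrightarrow> G \<in> carrier_mat k n \<and>
     C = {x. \<exists>y\<in>carrier_vec k. x = transpose_mat G *\<^sub>v y}"

definition is_pc_matrix :: "nat \<Rightarrow> nat \<Rightarrow> 'a::field vec set \<Rightarrow> 'a mat \<Rightarrow> bool" where
  "is_pc_matrix n k C H \<longleftrightarrow> H \<in> carrier_mat (n - k) n \<and>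
     C = {x\<in>carrier_vec n. H *\<^sub>v x = 0\<^sub>v (n - k)}"

definition mat_epow :: "'a::field mat \<Rightarrow> nat \<Rightarrow> 'a mat" where
  "mat_epow A m = map_mat (\<lambda>a. a ^ m) A"

definition galois_form :: "nat \<Rightarrow> nat \<Rightarrow> 'a::field vec \<Rightarrow> 'a vec \<Rightarrow> 'a" where
  "galois_form p s x y = (\<Sum>i<dim_vec x. x $ i * (y $ i) ^ (p ^ s))"

definition galois_dual :: "nat \<Rightarrow> nat \<Rightarrow> nat \<Rightarrow> 'a::field vec set \<Rightarrow> 'a vec set" where
  "galois_dual p s n C = {x\<in>carrier_vec n. \<forall>c\<in>C. galois_form p s c x = 0}"

text \<open>Trace F_q \<rightarrow> F_p (q = p^e), and its value as a natural number j < p (F_p = {of_nat j}).\<close>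
definition ftrace :: "nat \<Rightarrow> nat \<Rightarrow> 'a::field \<Rightarrow> 'a" where
  "ftrace p e x = (\<Sum>i<e. x ^ (p ^ i))"

definition trace_nat :: "nat \<Rightarrow> nat \<Rightarrow> 'a::field \<Rightarrow> nat" where
  "trace_nat p e x = (THE j. j < p \<and> of_nat j = ftrace p e x)"

definition chi :: "nat \<Rightarrow> nat \<Rightarrow> 'a::field \<Rightarrow> complex" where
  "chi p e x = cis (2 * pi * real (trace_nat p e x) / real p)"

text \<open>V_n: a state is a complex function on F_q^n (coefficients w.r.t. the basis |c>),
  vanishing outside F_q^n = carrier_vec n.\<close>
definition states :: "nat \<Rightarrow> ('a vec \<Rightarrow> complex) set" where
  "states n = {v. \<forall>x. x \<notin> carrier_vec n \<longrightarrow> v x = 0}"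

definition qscale :: "complex \<Rightarrow> ('a vec \<Rightarrow> complex) \<Rightarrow> ('a vec \<Rightarrow> complex)" where
  "qscale c v = (\<lambda>x. c * v x)"

definition qinner :: "nat \<Rightarrow> ('a vec \<Rightarrow> complex) \<Rightarrow> ('a vec \<Rightarrow> complex) \<Rightarrow> complex" where
  "qinner n u v = (\<Sum>x\<in>carrier_vec n. cnj (u x) * v x)"

text \<open>Action of the error omega^c X(a) Z(b):
  X(a) Z(b) |x> = omega^(tr(b.x)) |x + a>, hence (E v)(y) = omega^c omega^(tr(b.(y-a))) v(y-a).\<close>
definition err_apply :: "nat \<Rightarrow> nat \<Rightarrow> nat \<Rightarrow> nat \<Rightarrow> 'a::field vec \<Rightarrow> 'a vec
    \<Rightarrow> ('a vec \<Rightarrow> complex) \<Rightarrow> ('a vec \<Rightarrow> complex)" where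
  "err_apply p e n c a b v = (\<lambda>y. if y \<in> carrier_vec n
      then cis (2 * pi * real c / real p) * chi p e (b \<bullet> (y - a)) * v (y - a) else 0)"

definition err_weight :: "nat \<Rightarrow> 'a::zero vec \<Rightarrow> 'a vec \<Rightarrow> nat" where
  "err_weight n a b = card {i. i < n \<and> (a $ i \<noteq> 0 \<or> b $ i \<noteq> 0)}"

text \<open>Q is an [[n,k,d]]_q quantum code (q = p^e): a complex subspace of V_n of dimension q^k
  such that every error of weight at most d-1 is detected; for k = 0 the purity convention
  <v|E|v> = 0 for all v in Q and all errors E of weight 1..d-1 is used.\<close>
definition quantum_code :: "nat \<Rightarrow> nat \<Rightarrow> nat \<Rightarrow> nat \<Rightarrow> nat \<Rightarrow> ('a::{finite,field} vec \<Rightarrow> complex) set \<Rightarrow> bool" where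
  "quantum_code p e n k d Q \<longleftrightarrow>
     Q \<subseteq> states n \<and> Modules.module.subspace qscale Q \<and>
     Vector_Spaces.vector_space.dim qscale Q = card (UNIV :: 'a set) ^ k \<and>
     (if k = 0 then
        (\<forall>v\<in>Q. \<forall>c a b. a \<in> carrier_vec n \<longrightarrow> b \<in> carrier_vec n \<longrightarrow>
            1 \<le> err_weight n a b \<longrightarrow> err_weight n a b \<le> d - 1 \<longrightarrow>
            qinner n v (err_apply p e n c a b v) = 0)
      else
        (\<forall>u\<in>Q. \<forall>v\<in>Q. qinner n u v = 0 \<longrightarrow> (\<forall>c a b. a \<in> carrier_vec n \<longrightarrow> b \<in> carrier_vec n \<longrightarrow>
            err_weight n a b \<le> d - 1 \<longrightarrow> qinner n u (err_apply p e n c a b v) = 0)))"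

end

theory Submission
  imports Defs "HOL-Computational_Algebra.Polynomial" "HOL-Computational_Algebra.Primes"
begin

lemma pow_card_same:
  fixes x :: "'a::{finite,field}"
  shows "x ^ card (UNIV :: 'a set) = x"
proof (cases "x = 0")
  case False
  have "x * (\<Prod>y\<in>UNIV-{0}. x * y) = x * x ^ (card (UNIV :: 'a set) - 1) * \<Prod>(UNIV-{0})"
    by (simp add: prod.distrib mult_ac)
  also have "x * x ^ (card (UNIV :: 'a set) - 1) = x ^ Suc (card (UNIV :: 'a set) - 1)"
    by (subst power_Suc) auto
  also have "Suc (card (UNIV :: 'a set) - 1) = card (UNIV :: 'a set)"
    using finite_UNIV_card_ge_0[where ?'a = 'a] by simp
  also have "(\<Prod>y\<in>UNIV-{0}. x * y) = (\<Prod>y\<in>UNIV-{0}. y)"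
    by (rule prod.reindex_bij_witness[of _ "\<lambda>y. y / x" "\<lambda>y. x * y"]) (use False in auto)
  finally show ?thesis
    by simp
qed (use finite_UNIV_card_ge_0[where ?'a = 'a] in auto)

lemma frob_add:
  fixes x y :: "'a::field"
  assumes "prime p" "CHAR('a) = p"
  shows "(x + y) ^ (p ^ i) = x ^ (p ^ i) + y ^ (p ^ i)"
  using assms by (intro freshmans_dream') auto

lemma frob_sum:
  fixes f :: "'b \<Rightarrow> 'a::field"
  assumes "prime p" "CHAR('a) = p"
  shows "(sum f A) ^ (p ^ i) = (\<Sum>x\<in>A. f x ^ (p ^ i))"
  using assms by (intro freshmans_dream_sum') auto

lemma ftrace_add:
  fixes x y :: "'a::field"
  assumes "prime p" "CHAR('a) = p"
  shows "ftrace p e (x + y) = ftrace p e x + ftrace p e y"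
  unfolding ftrace_def using frob_add[OF assms] by (simp add: sum.distrib)

lemma ftrace_pow:
  fixes x :: "'a::{finite,field}"
  assumes "prime p" "CHAR('a) = p" "card (UNIV::'a set) = p ^ e"
  shows "ftrace p e x ^ p = ftrace p e x"
proof -
  have "ftrace p e x ^ (p ^ 1) = (\<Sum>i<e. (x ^ (p ^ i)) ^ (p ^ 1))"
    unfolding ftrace_def by (rule frob_sum[OF assms(1,2)])
  also have "\<dots> = (\<Sum>i<e. x ^ (p ^ Suc i))"
    by (simp add: power_mult[symmetric] mult.commute)
  also have "\<dots> = ftrace p e x"
  proof -
    have "(\<Sum>i<Suc e. x ^ (p ^ i)) = x ^ (p ^ 0) + (\<Sum>i<e. x ^ (p ^ Suc i))"
      by (rule sum.lessThan_Suc_shift)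
    moreover have "(\<Sum>i<Suc e. x ^ (p ^ i)) = (\<Sum>i<e. x ^ (p ^ i)) + x ^ (p ^ e)"
      by simp
    moreover have "x ^ (p ^ e) = x" using pow_card_same[of x] assms(3) by simp
    ultimately show ?thesis unfolding ftrace_def by (simp add: add.commute)
  qed
  finally show ?thesis by simp
qed

lemma of_nat_inj_CHAR:
  assumes "CHAR('a::field) = p" "i < p" "j < p" "(of_nat i :: 'a) = of_nat j"
  shows "i = j"
proof (rule ccontr)
  assume ne: "i \<noteq> j"
  { fix a b :: nat assume ab: "a < b" "b < p" "(of_nat a :: 'a) = of_nat b"
    have "(of_nat b :: 'a) = of_nat a + of_nat (b - a)" using ab by (simp flip: of_nat_add)
    hence "(of_nat (b - a) :: 'a) = 0" using ab by simp
    hence "p dvd (b - a)" using assms(1) of_nat_eq_0_iff_char_dvd by blast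
    hence "p \<le> b - a" using ab by (intro dvd_imp_le) auto
    hence False using ab by linarith }
  then show False using ne assms by (metis linorder_neqE_nat)
qed

lemma of_nat_pow_p:
  assumes "prime p" "CHAR('a::field) = p"
  shows "(of_nat j :: 'a) ^ p = of_nat j"
proof (induction j)
  case 0 then show ?case using assms prime_gt_0_nat by auto
next
  case (Suc j)
  have "(of_nat j + 1 :: 'a) ^ (p ^ 1) = of_nat j ^ (p ^ 1) + 1 ^ (p ^ 1)" by (rule frob_add[OF assms])
  then show ?case using Suc by (simp add: add.commute)
qed

lemma prime_field_elem:
  fixes z :: "'a::field"
  assumes "prime p" "CHAR('a) = p" "z ^ p = z"
  shows "\<exists>j<p. of_nat j = z"
proof -
  define P :: "'a poly" where "P = monom 1 p - [:0, 1:]"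
  have p2: "p \<ge> 2" using assms(1) prime_ge_2_nat by blast
  have cP: "coeff P p = 1" using p2 by (simp add: P_def coeff_pCons split: nat.split)
  hence P0: "P \<noteq> 0" by auto
  have dP: "degree P \<le> p"
    unfolding P_def by (rule degree_le) (use p2 in \<open>auto simp: coeff_pCons split: nat.split\<close>)
  have roots: "{x. poly P x = 0} = {x::'a. x ^ p = x}"
    by (auto simp: P_def poly_monom)
  have cr: "card {x::'a. x ^ p = x} \<le> p"
    using card_poly_roots_bound[OF P0] dP roots by simp
  have fin: "finite {x::'a. x ^ p = x}"
    using poly_roots_finite[OF P0] roots by simp
  have sub: "of_nat ` {..<p} \<subseteq> {x::'a. x ^ p = x}"
    using of_nat_pow_p[OF assms(1,2)] by auto
  have inj: "inj_on (of_nat :: nat \<Rightarrow> 'a) {..<p}"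
    by (rule inj_onI) (use of_nat_inj_CHAR[OF assms(2)] in auto)
  have "card (of_nat ` {..<p} :: 'a set) = p" using card_image[OF inj] by simp
  moreover have "card (of_nat ` {..<p} :: 'a set) \<le> card {x::'a. x ^ p = x}"
    by (rule card_mono[OF fin sub])
  ultimately have "of_nat ` {..<p} = {x::'a. x ^ p = x}"
    using cr by (intro card_subset_eq[OF fin sub]) simp
  then show ?thesis using assms(3) by (metis (mono_tags, lifting) imageE lessThan_iff mem_Collect_eq)
qed

lemma trace_nat_spec:
  fixes x :: "'a::{finite,field}"
  assumes "prime p" "CHAR('a) = p" "card (UNIV::'a set) = p ^ e"
  shows "trace_nat p e x < p \<and> of_nat (trace_nat p e x) = ftrace p e x"
proof -
  obtain j where j: "j < p" "of_nat j = ftrace p e x"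
    using prime_field_elem[OF assms(1,2) ftrace_pow[OF assms]] by blast
  have "\<exists>!j. j < p \<and> of_nat j = ftrace p e x"
    using j of_nat_inj_CHAR[OF assms(2)] by (intro ex1I[of _ j]) auto
  then show ?thesis unfolding trace_nat_def by (rule theI')
qed

lemma trace_nat_eqI:
  fixes x :: "'a::{finite,field}"
  assumes "prime p" "CHAR('a) = p" "card (UNIV::'a set) = p ^ e"
    and "j < p" "of_nat j = ftrace p e x"
  shows "trace_nat p e x = j"
  using trace_nat_spec[OF assms(1-3), of x] assms(4,5) of_nat_inj_CHAR[OF assms(2)] by metis

lemma trace_nat_add:
  fixes x y :: "'a::{finite,field}"
  assumes "prime p" "CHAR('a) = p" "card (UNIV::'a set) = p ^ e"
  shows "trace_nat p e (x + y) = (trace_nat p e x + trace_nat p e y) mod p"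
proof (rule trace_nat_eqI[OF assms])
  show "(trace_nat p e x + trace_nat p e y) mod p < p"
    using assms(1) prime_gt_0_nat by auto
  have "(of_nat ((trace_nat p e x + trace_nat p e y) mod p) :: 'a)
        = of_nat (trace_nat p e x + trace_nat p e y)"
  proof -
    let ?m = "trace_nat p e x + trace_nat p e y"
    have "(of_nat ?m :: 'a) = of_nat (?m mod p) + of_nat p * of_nat (?m div p)"
      by (metis mod_mult_div_eq of_nat_add of_nat_mult)
    moreover have "(of_nat p :: 'a) = 0" using assms(2) of_nat_CHAR by metis
    ultimately show ?thesis by simp
  qed
  also have "\<dots> = ftrace p e x + ftrace p e y"
    using trace_nat_spec[OF assms, of x] trace_nat_spec[OF assms, of y] by simp
  finally show "(of_nat ((trace_nat p e x + trace_nat p e y) mod p) :: 'a) = ftrace p e (x + y)"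
    using ftrace_add[OF assms(1,2)] by simp
qed

lemma cis_mod:
  assumes "p > 0"
  shows "cis (2 * pi * real (m mod p) / real p) = cis (2 * pi * real m / real p)"
proof -
  have m: "real m = real (m mod p) + real p * real (m div p)"
    by (metis mod_mult_div_eq of_nat_add of_nat_mult)
  have eq: "cis (2 * pi * real m / real p) = cis (2 * pi * real (m mod p) / real p + 2 * pi * real (m div p))"
    using assms by (simp add: m field_simps)
  have one: "cis (2 * pi * real (m div p)) = 1"
    using cis_multiple_2pi[of "real (m div p)"] by simp
  show ?thesis unfolding eq cis_mult[symmetric] one by simp
qed

lemma chi_add:
  fixes x y :: "'a::{finite,field}"
  assumes "prime p" "CHAR('a) = p" "card (UNIV::'a set) = p ^ e"
  shows "chi p e (x + y) = chi p e x * chi p e y"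
proof -
  have p0: "p > 0" using assms(1) prime_gt_0_nat by auto
  show ?thesis
    unfolding chi_def trace_nat_add[OF assms] cis_mod[OF p0] cis_mult
    by (simp add: add_divide_distrib ring_distribs)
qed

lemma chi_zero:
  assumes "prime p" "CHAR('a::{finite,field}) = p" "card (UNIV::'a set) = p ^ e"
  shows "chi p e (0::'a) = 1"
proof -
  have "trace_nat p e (0::'a) = 0"
    using assms prime_gt_0_nat by (intro trace_nat_eqI[OF assms]) (auto simp: ftrace_def)
  then show ?thesis by (simp add: chi_def)
qed

lemma ftrace_nontrivial:
  assumes "prime p" "CHAR('a::{finite,field}) = p" "card (UNIV::'a set) = p ^ e" "1 \<le> e"
  shows "\<exists>t::'a. ftrace p e t \<noteq> 0"
proof (rule ccontr)
  assume "\<not> ?thesis"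
  hence all: "\<forall>t::'a. ftrace p e t = 0" by auto
  define P :: "'a poly" where "P = (\<Sum>i<e. monom 1 (p ^ i))"
  have p1: "p > 1" using assms(1) prime_gt_1_nat by auto
  have coeffP: "coeff P k = (\<Sum>i<e. if p ^ i = k then 1 else 0)" for k
    by (simp add: P_def coeff_sum coeff_monom)
  have "coeff P (p ^ (e - 1)) = (\<Sum>i\<in>{e-1}. 1)"
    unfolding coeffP
    by (rule sum.mono_neutral_cong_right) (use assms(4) p1 in \<open>auto simp: power_inject_exp\<close>)
  hence P0: "P \<noteq> 0" by auto
  have dP: "degree P \<le> p ^ (e - 1)"
  proof (rule degree_le, intro allI impI)
    fix k assume k: "p ^ (e - 1) < k"
    have "\<And>i. i < e \<Longrightarrow> p ^ i \<noteq> k"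
    proof -
      fix i assume i: "i < e"
      have "p ^ i \<le> p ^ (e - 1)" by (rule power_increasing) (use i p1 in auto)
      then show "p ^ i \<noteq> k" using k by linarith
    qed
    then show "coeff P k = 0" unfolding coeffP by simp
  qed
  have "poly P t = ftrace p e t" for t
    by (simp add: P_def ftrace_def poly_sum poly_monom)
  hence "{x. poly P x = 0} = (UNIV :: 'a set)" using all by auto
  hence "card (UNIV :: 'a set) \<le> p ^ (e - 1)" using card_poly_roots_bound[OF P0] dP by simp
  moreover have "p ^ (e - 1) < p ^ e" using p1 assms(4) by (simp add: power_strict_increasing_iff)
  ultimately show False using assms(3) by simp
qed

lemma chi_nontrivial:
  assumes "prime p" "CHAR('a::{finite,field}) = p" "card (UNIV::'a set) = p ^ e" "1 \<le> e"
  shows "\<exists>t::'a. chi p e t \<noteq> 1"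
proof -
  obtain t :: 'a where t: "ftrace p e t \<noteq> 0" using ftrace_nontrivial[OF assms] by blast
  let ?j = "trace_nat p e t"
  have j: "?j < p" "of_nat ?j = ftrace p e t" using trace_nat_spec[OF assms(1-3)] by auto
  have j0: "?j > 0" using j t by (cases ?j) auto
  have p0: "real p > 0" using assms(1) prime_gt_0_nat by auto
  have "chi p e t \<noteq> 1"
  proof
    assume "chi p e t = 1"
    hence "cos (2 * pi * real ?j / real p) = 1"
      unfolding chi_def by (metis Re_complex_of_real cis.sel(1) complex_Re_numeral one_complex.sel(1))
    from cos_one_2pi_int[THEN iffD1, OF this]
    obtain n :: int where n: "2 * pi * real ?j / real p = real_of_int n * 2 * pi" by blast
    hence "real ?j = n * real p" using p0 by (simp add: field_simps)
    moreover have "0 < real ?j" "real ?j < real p" using j0 j by auto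
    ultimately have "real_of_int n * real p > 0" "real_of_int n * real p < 1 * real p" by auto
    hence "0 < n" "n < 1" using p0 by (simp_all add: zero_less_mult_iff mult_less_cancel_right)
    then show False by simp
  qed
  then show ?thesis by blast
qed

definition lsub :: "nat \<Rightarrow> 'a::field vec set \<Rightarrow> bool" where
  "lsub m W \<longleftrightarrow> W \<subseteq> carrier_vec m \<and> 0\<^sub>v m \<in> W \<and> (\<forall>x\<in>W. \<forall>y\<in>W. x + y \<in> W) \<and> (\<forall>c. \<forall>x\<in>W. c \<cdot>\<^sub>v x \<in> W)"

definition orth :: "nat \<Rightarrow> 'a::field vec set \<Rightarrow> 'a vec set" where
  "orth m W = {y \<in> carrier_vec m. \<forall>x\<in>W. x \<bullet> y = 0}"

lemma carrier_vec_eq_image: "carrier_vec m = vec_of_list ` {xs. set xs \<subseteq> UNIV \<and> length xs = m}"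
proof
  show "carrier_vec m \<subseteq> vec_of_list ` {xs. set xs \<subseteq> UNIV \<and> length xs = m}"
  proof
    fix v assume "v \<in> carrier_vec m"
    then show "v \<in> vec_of_list ` {xs. set xs \<subseteq> UNIV \<and> length xs = m}"
      by (intro image_eqI[of _ _ "list_of_vec v"]) (auto simp: vec_list)
  qed
qed (auto intro: carrier_vecI)

lemma finite_carrier_vec[simp]: "finite (carrier_vec m :: 'a::finite vec set)"
  unfolding carrier_vec_eq_image by (intro finite_imageI finite_lists_length_eq) auto

lemma card_carrier_vec: "card (carrier_vec m :: 'a::finite vec set) = card (UNIV::'a set) ^ m"
proof -
  have "inj_on (vec_of_list :: 'a list \<Rightarrow> 'a vec) {xs. set xs \<subseteq> UNIV \<and> length xs = m}"
    by (metis inj_on_inverseI list_vec)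
  then show ?thesis unfolding carrier_vec_eq_image
    using card_lists_length_eq[of "UNIV::'a set" m] by (simp add: card_image)
qed

lemma vec_add_minus_cancel: "x \<in> carrier_vec m \<Longrightarrow> w \<in> carrier_vec m \<Longrightarrow> (x + w) - w = (x :: 'a::ab_group_add vec)"
  by (intro eq_vecI) auto
lemma vec_minus_add_cancel: "x \<in> carrier_vec m \<Longrightarrow> w \<in> carrier_vec m \<Longrightarrow> (x - w) + w = (x :: 'a::ab_group_add vec)"
  by (intro eq_vecI) auto
lemma vec_minus_as_add: "x \<in> carrier_vec m \<Longrightarrow> w \<in> carrier_vec m \<Longrightarrow> x - w = x + ((-1) \<cdot>\<^sub>v w :: 'a::field vec)"
  by (intro eq_vecI) auto

lemma lsub_carrier: "lsub m (carrier_vec m)"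
  unfolding lsub_def by auto

lemma lsub_minus: "lsub m W \<Longrightarrow> x \<in> W \<Longrightarrow> w \<in> W \<Longrightarrow> x - w \<in> W"
  unfolding lsub_def by (metis subsetD vec_minus_as_add)

lemma charsum_sub:
  fixes W :: "'a::{finite,field} vec set"
  assumes "prime p" "CHAR('a) = p" "card (UNIV::'a set) = p ^ e" "1 \<le> e"
    and W: "lsub m W" and b: "b \<in> carrier_vec m"
  shows "(\<Sum>x\<in>W. chi p e (b \<bullet> x)) = (if \<forall>x\<in>W. b \<bullet> x = 0 then of_nat (card W) else 0)"
proof (cases "\<forall>x\<in>W. b \<bullet> x = 0")
  case True
  then show ?thesis using chi_zero[OF assms(1-3)] by simp
next
  case False
  then obtain x0 where x0: "x0 \<in> W" "b \<bullet> x0 \<noteq> 0" by auto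
  obtain t :: 'a where t: "chi p e t \<noteq> 1" using chi_nontrivial[OF assms(1-4)] by blast
  define w0 where "w0 = (t / (b \<bullet> x0)) \<cdot>\<^sub>v x0"
  have Wc: "W \<subseteq> carrier_vec m" using W unfolding lsub_def by auto
  have w0W: "w0 \<in> W" using W x0 unfolding lsub_def w0_def by auto
  have w0c: "w0 \<in> carrier_vec m" using w0W Wc by auto
  have bw0: "b \<bullet> w0 = t"
    unfolding w0_def using b x0 Wc by (subst scalar_prod_smult_right) auto
  have fin: "finite W" using finite_subset[OF Wc finite_carrier_vec] .
  let ?S = "\<Sum>x\<in>W. chi p e (b \<bullet> x)"
  have "?S = (\<Sum>x\<in>W. chi p e (b \<bullet> (x + w0)))"
  proof (rule sum.reindex_bij_witness[of _ "\<lambda>x. x + w0" "\<lambda>x. x - w0"])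
    fix x assume x: "x \<in> W"
    show "x - w0 + w0 = x" using x Wc w0c vec_minus_add_cancel by blast
    show "x - w0 \<in> W" using lsub_minus[OF W x w0W] .
    show "chi p e (b \<bullet> (x - w0 + w0)) = chi p e (b \<bullet> x)"
      using x Wc w0c vec_minus_add_cancel by (metis subsetD)
  next
    fix x assume x: "x \<in> W"
    show "x + w0 - w0 = x" using x Wc w0c vec_add_minus_cancel by blast
    show "x + w0 \<in> W" using W x w0W unfolding lsub_def by auto
  qed
  also have "\<dots> = (\<Sum>x\<in>W. chi p e (b \<bullet> x) * chi p e t)"
  proof (rule sum.cong[OF refl])
    fix x assume x: "x \<in> W"
    have "b \<bullet> (x + w0) = b \<bullet> x + t"
      using scalar_prod_add_distrib[OF b, of x w0] x Wc w0c bw0 by auto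
    then show "chi p e (b \<bullet> (x + w0)) = chi p e (b \<bullet> x) * chi p e t"
      using chi_add[OF assms(1-3)] by simp
  qed
  also have "\<dots> = ?S * chi p e t" by (simp add: sum_distrib_right)
  finally have "?S * (1 - chi p e t) = 0" by (simp add: algebra_simps)
  hence "?S = 0" using t by simp
  then show ?thesis using False by auto
qed

lemma orth_lsub: "lsub m (orth m W)" if "W \<subseteq> carrier_vec m"
  unfolding lsub_def orth_def
proof (intro conjI ballI allI)
  show "0\<^sub>v m \<in> {y \<in> carrier_vec m. \<forall>x\<in>W. x \<bullet> y = 0}" using that by auto
next
  fix x y assume x: "x \<in> {y \<in> carrier_vec m. \<forall>x\<in>W. x \<bullet> y = (0::'a)}"
    and y: "y \<in> {y \<in> carrier_vec m. \<forall>x\<in>W. x \<bullet> y = (0::'a)}"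
  show "x + y \<in> {y \<in> carrier_vec m. \<forall>x\<in>W. x \<bullet> y = 0}"
    using x y that by (auto simp: scalar_prod_add_distrib[of _ m])
next
  fix c :: 'a and x assume x: "x \<in> {y \<in> carrier_vec m. \<forall>x\<in>W. x \<bullet> y = (0::'a)}"
  show "c \<cdot>\<^sub>v x \<in> {y \<in> carrier_vec m. \<forall>x\<in>W. x \<bullet> y = 0}"
    using x that by auto
qed auto

lemma orth_antimono: "A \<subseteq> B \<Longrightarrow> orth m B \<subseteq> orth m A"
  unfolding orth_def by auto

lemma unit_orth_zero:
  fixes x :: "'a::field vec"
  assumes "x \<in> carrier_vec m" "\<forall>b\<in>carrier_vec m. x \<bullet> b = 0"
  shows "x = 0\<^sub>v m"
proof (rule eq_vecI)
  fix i assume "i < dim_vec (0\<^sub>v m :: 'a vec)"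
  hence i: "i < m" by simp
  have "x \<bullet> unit_vec m i = 0" using assms(2) unit_vec_carrier[of m i] by blast
  then show "x $ i = 0\<^sub>v m $ i" using i by simp
qed (use assms in auto)

lemma charsum_full:
  fixes x :: "'a::{finite,field} vec"
  assumes "prime p" "CHAR('a) = p" "card (UNIV::'a set) = p ^ e" "1 \<le> e"
    and x: "x \<in> carrier_vec m"
  shows "(\<Sum>b\<in>carrier_vec m. chi p e (b \<bullet> x)) = (if x = 0\<^sub>v m then of_nat (card (UNIV::'a set) ^ m) else 0)"
proof -
  have "(\<Sum>b\<in>carrier_vec m. chi p e (b \<bullet> x)) = (\<Sum>b\<in>carrier_vec m. chi p e (x \<bullet> b))"
    using x by (intro sum.cong refl) (metis comm_scalar_prod)
  also have "\<dots> = (if \<forall>b\<in>carrier_vec m. x \<bullet> b = 0 then of_nat (card (carrier_vec m :: 'a vec set)) else 0)"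
    by (rule charsum_sub[OF assms(1-4) lsub_carrier x])
  also have "(\<forall>b\<in>carrier_vec m. x \<bullet> b = 0) \<longleftrightarrow> x = 0\<^sub>v m"
    using unit_orth_zero[OF x] x by auto
  finally show ?thesis by (simp add: card_carrier_vec)
qed

lemma card_orth:
  fixes W :: "'a::{finite,field} vec set"
  assumes "prime p" "CHAR('a) = p" "card (UNIV::'a set) = p ^ e" "1 \<le> e"
    and W: "lsub m W"
  shows "card W * card (orth m W) = card (UNIV::'a set) ^ m"
proof -
  have Wc: "W \<subseteq> carrier_vec m" using W unfolding lsub_def by auto
  have fin: "finite W" using finite_subset[OF Wc finite_carrier_vec] .
  have "(\<Sum>b\<in>carrier_vec m. \<Sum>x\<in>W. chi p e (b \<bullet> x))
       = (\<Sum>b\<in>carrier_vec m. if b \<in> orth m W then of_nat (card W) else 0)"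
  proof (rule sum.cong[OF refl])
    fix b :: "'a vec" assume b: "b \<in> carrier_vec m"
    have "\<forall>x\<in>W. b \<bullet> x = x \<bullet> b" using b Wc by (metis comm_scalar_prod subsetD)
    then have "(\<forall>x\<in>W. b \<bullet> x = 0) \<longleftrightarrow> b \<in> orth m W"
      unfolding orth_def using b by auto
    then show "(\<Sum>x\<in>W. chi p e (b \<bullet> x)) = (if b \<in> orth m W then of_nat (card W) else 0)"
      using charsum_sub[OF assms(1-4) W b] by simp
  qed
  also have "\<dots> = of_nat (card (orth m W) * card W)"
  proof -
    have "orth m W \<subseteq> carrier_vec m" unfolding orth_def by auto
    then have "carrier_vec m \<inter> orth m W = orth m W" by auto
    then show ?thesis by (simp add: sum.If_cases)
  qed
  finally have 1: "(\<Sum>b\<in>carrier_vec m. \<Sum>x\<in>W. chi p e (b \<bullet> x)) = of_nat (card (orth m W) * card W)" .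
  have "(\<Sum>b\<in>carrier_vec m. \<Sum>x\<in>W. chi p e (b \<bullet> x)) = (\<Sum>x\<in>W. \<Sum>b\<in>carrier_vec m. chi p e (b \<bullet> x))"
    by (rule sum.swap)
  also have "\<dots> = (\<Sum>x\<in>W. if x = 0\<^sub>v m then of_nat (card (UNIV::'a set) ^ m) else 0)"
    using Wc by (intro sum.cong refl charsum_full[OF assms(1-4)]) auto
  also have "\<dots> = of_nat (card (UNIV::'a set) ^ m)"
    using W fin unfolding lsub_def by (simp add: sum.delta')
  finally have "(of_nat (card (orth m W) * card W) :: complex) = of_nat (card (UNIV::'a set) ^ m)"
    using 1 by simp
  then show ?thesis by (simp only: of_nat_eq_iff mult.commute)
qed

lemma orth_orth:
  fixes W :: "'a::{finite,field} vec set"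
  assumes "prime p" "CHAR('a) = p" "card (UNIV::'a set) = p ^ e" "1 \<le> e"
    and W: "lsub m W"
  shows "orth m (orth m W) = W"
proof -
  have Wc: "W \<subseteq> carrier_vec m" using W unfolding lsub_def by auto
  have oc: "orth m W \<subseteq> carrier_vec m" unfolding orth_def by auto
  have sub: "W \<subseteq> orth m (orth m W)"
    unfolding orth_def using Wc by (auto, metis comm_scalar_prod subsetD)
  have fin: "finite (orth m (orth m W))"
    by (rule finite_subset[OF _ finite_carrier_vec]) (auto simp: orth_def)
  have c1: "card W * card (orth m W) = card (UNIV::'a set) ^ m" by (rule card_orth[OF assms])
  have c2: "card (orth m W) * card (orth m (orth m W)) = card (UNIV::'a set) ^ m"
    by (intro card_orth[OF assms(1-4)] orth_lsub oc Wc)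
  have pos: "card (orth m W) > 0"
    using orth_lsub[OF Wc] finite_subset[OF oc finite_carrier_vec] unfolding lsub_def
    by (auto simp: card_gt_0_iff)
  have "card W = card (orth m (orth m W))" using c1 c2 pos by (metis mult.commute mult_left_cancel neq0_conv)
  then show ?thesis using card_subset_eq[OF fin sub] by simp
qed

lemma (in ring) minus_zero_imp_eq:
  assumes "x \<in> carrier R" "y \<in> carrier R" "x \<ominus> y = \<zero>"
  shows "x = y"
proof -
  have "x = (x \<oplus> \<ominus> y) \<oplus> y" using assms by (simp add: a_assoc l_neg)
  also have "\<dots> = y" using assms by (simp add: minus_eq)
  finally show ?thesis .
qed

lemma (in vectorspace) card_carrier_dim:
  assumes fin: "finite (carrier V)"
  shows "card (carrier V) = card (carrier K) ^ dim"
proof -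
  have gen: "gen_set (carrier V)"
    using span_is_subset2[of "carrier V"] in_own_span[of "carrier V"] by auto
  have fd: fin_dim unfolding fin_dim_def using fin gen by auto
  obtain \<beta> where \<beta>: "finite \<beta>" "basis \<beta>" using finite_basis_exists[OF fd] by blast
  have bC: "\<beta> \<subseteq> carrier V" and li: "lin_indpt \<beta>" and gb: "gen_set \<beta>"
    using \<beta>(2) unfolding basis_def by auto
  have dim: "dim = card \<beta>" by (rule dim_basis[OF \<beta>])
  have bij: "bij_betw (\<lambda>a. lincomb a \<beta>) (\<beta> \<rightarrow>\<^sub>E carrier K) (carrier V)"
  proof (rule bij_betwI')
    fix a b assume a: "a \<in> \<beta> \<rightarrow>\<^sub>E carrier K" and b: "b \<in> \<beta> \<rightarrow>\<^sub>E carrier K"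
    show "(lincomb a \<beta> = lincomb b \<beta>) = (a = b)"
    proof
      assume eq: "lincomb a \<beta> = lincomb b \<beta>"
      have "lincomb (\<lambda>v. a v \<ominus>\<^bsub>K\<^esub> b v) \<beta> = lincomb a \<beta> \<ominus>\<^bsub>V\<^esub> lincomb b \<beta>"
        using a b by (intro lincomb_diff[OF \<beta>(1) bC]) auto
      also have "\<dots> = \<zero>\<^bsub>V\<^esub>" using eq lincomb_closed[OF bC, of b] b by (simp add: PiE_iff r_neg)
      finally have z: "lincomb (\<lambda>v. a v \<ominus>\<^bsub>K\<^esub> b v) \<beta> = \<zero>\<^bsub>V\<^esub>" .
      have "\<forall>v\<in>\<beta>. a v = b v"
      proof (rule ccontr)
        assume "\<not> (\<forall>v\<in>\<beta>. a v = b v)"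
        then obtain v where v: "v \<in> \<beta>" "a v \<noteq> b v" by auto
        have "a v \<ominus>\<^bsub>K\<^esub> b v \<noteq> \<zero>\<^bsub>K\<^esub>"
          using v a b ring.minus_zero_imp_eq[OF is_ring] by (metis PiE_iff)
        hence "lin_dep \<beta>"
          using a b v z by (intro lin_dep_crit[OF \<beta>(1) subset_refl, of "\<lambda>v. a v \<ominus>\<^bsub>K\<^esub> b v" v]) (auto simp: PiE_iff)
        then show False using li by simp
      qed
      then show "a = b" using a b by (metis PiE_ext)
    qed simp
  next
    fix a assume "a \<in> \<beta> \<rightarrow>\<^sub>E carrier K"
    then show "lincomb a \<beta> \<in> carrier V" using bC by (intro lincomb_closed) auto
  next
    fix v assume v: "v \<in> carrier V"
    then have "v \<in> span \<beta>" using gb by simp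
    then obtain a where a: "a \<in> \<beta> \<rightarrow> carrier K" "lincomb a \<beta> = v"
      using finite_in_span[OF \<beta>(1) bC] by blast
    have "lincomb (restrict a \<beta>) \<beta> = lincomb a \<beta>"
      by (rule lincomb_cong) (use a bC in auto)
    then show "\<exists>a\<in>\<beta> \<rightarrow>\<^sub>E carrier K. v = lincomb a \<beta>"
      using a by (intro bexI[of _ "restrict a \<beta>"]) auto
  qed
  have "card (carrier V) = card (\<beta> \<rightarrow>\<^sub>E carrier K)" using bij_betw_same_card[OF bij] by simp
  also have "\<dots> = card (carrier K) ^ card \<beta>" using \<beta>(1) by (simp add: card_PiE)
  finally show ?thesis using dim by simp
qed

lemma fsub_lsub:
  assumes "is_fsubspace n (W :: 'a::field vec set)"
  shows "lsub n W"
proof -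
  have sm: "submodule class_ring W (module_vec TYPE('a) n)"
    using assms unfolding is_fsubspace_def subspace_def by auto
  show ?thesis unfolding lsub_def
    using submodule.subset[OF sm] submodule.m_closed[OF sm] submodule.zero_closed[OF sm]
      submodule.smult_closed[OF sm]
    by (auto simp: module_vec_simps)
qed

lemma lsub_fsub:
  assumes "lsub n (W :: 'a::field vec set)"
  shows "is_fsubspace n W"
proof -
  interpret vec_space "TYPE('a)" n .
  have "submodule class_ring W (module_vec TYPE('a) n)"
    by (rule submodule.intro[OF vec_module]) (use assms in \<open>auto simp: lsub_def module_vec_simps\<close>)
  then show ?thesis unfolding is_fsubspace_def subspace_def using vec_vs by auto
qed

lemma card_fsub:
  assumes "is_fsubspace n (W :: 'a::{finite,field} vec set)"
  shows "card W = card (UNIV :: 'a set) ^ fdim n W"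
proof -
  interpret vec_space "TYPE('a)" n .
  have ss: "subspace class_ring W V" using assms unfolding is_fsubspace_def by simp
  have vs: "vectorspace class_ring (V\<lparr>carrier := W\<rparr>)" by (rule subspace_is_vs[OF ss])
  have fin: "finite W" using lsub_def fsub_lsub[OF assms] finite_subset finite_carrier_vec by metis
  have "card (carrier (V\<lparr>carrier := W\<rparr>)) = card (carrier (class_ring :: 'a ring)) ^ vectorspace.dim class_ring (V\<lparr>carrier := W\<rparr>)"
    using fin by (intro vectorspace.card_carrier_dim[OF vs]) simp
  then show ?thesis unfolding fdim_def by simp
qed

locale qsetup =
  fixes p e s :: nat and ty :: "'a::{finite,field} itself"
  assumes pr: "prime p" and ch: "CHAR('a) = p" and cd: "card (UNIV::'a set) = p ^ e"
    and e1: "1 \<le> e" and se: "s < e"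
begin

definition sg :: "'a \<Rightarrow> 'a" where "sg x = x ^ (p ^ (e - s))"
definition ta :: "'a \<Rightarrow> 'a" where "ta x = x ^ (p ^ s)"

lemma pe_id: "(x::'a) ^ (p ^ e) = x" using pow_card_same[of x] cd by simp

lemma sg_ta[simp]: "sg (ta x) = x"
proof -
  have "sg (ta x) = x ^ (p ^ s * p ^ (e - s))" unfolding sg_def ta_def by (simp add: power_mult)
  also have "p ^ s * p ^ (e - s) = p ^ e" using se by (simp flip: power_add)
  finally show ?thesis using pe_id by simp
qed

lemma ta_sg[simp]: "ta (sg x) = x"
proof -
  have "ta (sg x) = x ^ (p ^ (e - s) * p ^ s)" unfolding sg_def ta_def by (simp add: power_mult)
  also have "p ^ (e - s) * p ^ s = p ^ e" using se by (simp flip: power_add)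
  finally show ?thesis using pe_id by simp
qed

lemma sg_add[simp]: "sg (x + y) = sg x + sg y"
  unfolding sg_def by (rule frob_add[OF pr ch])
lemma sg_mult[simp]: "sg (x * y) = sg x * sg y"
  unfolding sg_def by (simp add: power_mult_distrib)
lemma sg_zero[simp]: "sg 0 = 0"
  unfolding sg_def using pr prime_gt_0_nat by simp
lemma sg_eq_iff[simp]: "sg x = sg y \<longleftrightarrow> x = y"
  by (metis ta_sg)
lemma sg_eq0[simp]: "sg x = 0 \<longleftrightarrow> x = 0"
  using sg_eq_iff[of x 0] by simp
lemma sg_sum: "sg (sum f A) = (\<Sum>i\<in>A. sg (f i))"
  unfolding sg_def by (rule frob_sum[OF pr ch])

lemma sg_epow: "mat_epow H (p ^ (e - s)) = map_mat sg H"
  unfolding mat_epow_def sg_def ..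

abbreviation vsg :: "'a vec \<Rightarrow> 'a vec" where "vsg \<equiv> map_vec sg"
abbreviation vta :: "'a vec \<Rightarrow> 'a vec" where "vta \<equiv> map_vec ta"

lemma vsg_vta[simp]: "vsg (vta x) = x" by (intro eq_vecI) auto
lemma vta_vsg[simp]: "vta (vsg x) = x" by (intro eq_vecI) auto
lemma vsg_inj: "inj vsg" by (metis injI vta_vsg)

lemma vsg_add: "x \<in> carrier_vec m \<Longrightarrow> y \<in> carrier_vec m \<Longrightarrow> vsg (x + y) = vsg x + vsg y"
  by (intro eq_vecI) auto
lemma vsg_smult: "vsg (c \<cdot>\<^sub>v x) = sg c \<cdot>\<^sub>v vsg x"
  by (intro eq_vecI) auto
lemma vsg_zero: "vsg (0\<^sub>v m) = 0\<^sub>v m"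
  by (intro eq_vecI) auto

lemma hweight_vsg: "hweight (vsg v) = hweight v"
proof -
  have "{i. i < dim_vec (vsg v) \<and> vsg v $ i \<noteq> 0} = {i. i < dim_vec v \<and> v $ i \<noteq> 0}" by auto
  then show ?thesis unfolding hweight_def by simp
qed

lemma lsub_vsg:
  assumes "lsub m C"
  shows "lsub m (vsg ` C)"
  unfolding lsub_def
proof (intro conjI ballI allI)
  show "vsg ` C \<subseteq> carrier_vec m" using assms unfolding lsub_def by auto
  show "0\<^sub>v m \<in> vsg ` C" using assms unfolding lsub_def by (metis image_eqI vsg_zero)
next
  fix x y assume "x \<in> vsg ` C" "y \<in> vsg ` C"
  then obtain x' y' where "x' \<in> C" "y' \<in> C" "x = vsg x'" "y = vsg y'" by auto
  moreover have "x' + y' \<in> C" "x' \<in> carrier_vec m" "y' \<in> carrier_vec m"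
    using assms calculation unfolding lsub_def by auto
  ultimately show "x + y \<in> vsg ` C" by (metis image_eqI vsg_add)
next
  fix c x assume "x \<in> vsg ` C"
  then obtain x' where "x' \<in> C" "x = vsg x'" by auto
  moreover have "ta c \<cdot>\<^sub>v x' \<in> C" using assms calculation unfolding lsub_def by auto
  ultimately show "c \<cdot>\<^sub>v x \<in> vsg ` C" by (metis image_eqI vsg_smult sg_ta)
qed

lemma card_vsg: "card (vsg ` C) = card C"
  using vsg_inj by (simp add: card_image inj_on_subset)

lemma galois_form_sg:
  assumes "c \<in> carrier_vec m" "x \<in> carrier_vec m"
  shows "sg (galois_form p s c x) = vsg c \<bullet> x"
proof -
  have "sg (galois_form p s c x) = (\<Sum>i<m. sg (c $ i) * x $ i)"
    unfolding galois_form_def using assms by (simp add: sg_sum flip: ta_def)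
  also have "\<dots> = vsg c \<bullet> x"
    unfolding scalar_prod_def using assms by (intro sum.cong) auto
  finally show ?thesis .
qed

lemma galois_dual_orth:
  assumes "C \<subseteq> carrier_vec m"
  shows "galois_dual p s m C = orth m (vsg ` C)"
proof -
  have "\<forall>c\<in>C. (galois_form p s c x = 0 \<longleftrightarrow> vsg c \<bullet> x = 0)" if "x \<in> carrier_vec m" for x
    using galois_form_sg assms that by (metis sg_eq0 subsetD)
  then show ?thesis unfolding galois_dual_def orth_def by auto
qed

lemma sg_mat_mult:
  assumes H: "H \<in> carrier_mat r m" and x: "x \<in> carrier_vec m"
  shows "map_mat sg H *\<^sub>v x = vsg (H *\<^sub>v vta x)"
proof (rule eq_vecI)
  fix i assume "i < dim_vec (vsg (H *\<^sub>v vta x))"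
  hence i: "i < r" using H by simp
  have "(map_mat sg H *\<^sub>v x) $ i = (\<Sum>j<m. sg (H $$ (i, j)) * x $ j)"
    using H x i by (simp add: scalar_prod_def row_def atLeast0LessThan)
  also have "\<dots> = sg (\<Sum>j<m. H $$ (i, j) * ta (x $ j))" by (simp add: sg_sum)
  also have "\<dots> = vsg (H *\<^sub>v vta x) $ i"
    using H x i by (simp add: scalar_prod_def row_def atLeast0LessThan)
  finally show "(map_mat sg H *\<^sub>v x) $ i = vsg (H *\<^sub>v vta x) $ i" .
qed (use H in auto)

end

lemma mat_vec_zero: "A \<in> carrier_mat nr nc \<Longrightarrow> A *\<^sub>v 0\<^sub>v nc = (0\<^sub>v nr :: 'a::semiring_0 vec)"
  by (intro eq_vecI) (auto simp: row_def)

lemma vec_first_append: "u \<in> carrier_vec k \<Longrightarrow> vec_first (u @\<^sub>v w) k = u"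
  unfolding vec_first_def by (intro eq_vecI) auto

lemma lsub_inter: "lsub m A \<Longrightarrow> lsub m B \<Longrightarrow> lsub m (A \<inter> B)"
  unfolding lsub_def by auto

lemma lsub_image_mat:
  assumes G: "G \<in> carrier_mat k n"
  shows "lsub k ((\<lambda>x. G *\<^sub>v x) ` carrier_vec n :: 'a::field vec set)"
  unfolding lsub_def
proof (intro conjI ballI allI)
  show "(\<lambda>x. G *\<^sub>v x) ` carrier_vec n \<subseteq> carrier_vec k" using G by auto
  show "0\<^sub>v k \<in> (\<lambda>x. G *\<^sub>v x) ` carrier_vec n"
    using mat_vec_zero[OF G] by (metis image_eqI zero_carrier_vec)
next
  fix x y assume "x \<in> (\<lambda>x. G *\<^sub>v x) ` carrier_vec n" "y \<in> (\<lambda>x. G *\<^sub>v x) ` carrier_vec n"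
  then obtain x' y' where "x' \<in> carrier_vec n" "y' \<in> carrier_vec n" "x = G *\<^sub>v x'" "y = G *\<^sub>v y'" by auto
  then show "x + y \<in> (\<lambda>x. G *\<^sub>v x) ` carrier_vec n"
    using mult_add_distrib_mat_vec[OF G] by (metis add_carrier_vec image_eqI)
next
  fix c :: 'a and x assume "x \<in> (\<lambda>x. G *\<^sub>v x) ` carrier_vec n"
  then obtain x' where "x' \<in> carrier_vec n" "x = G *\<^sub>v x'" by auto
  then show "c \<cdot>\<^sub>v x \<in> (\<lambda>x. G *\<^sub>v x) ` carrier_vec n"
    using mult_mat_vec[OF G] by (metis smult_carrier_vec image_eqI)
qed

lemma mat_rank_card:
  fixes A :: "'a::{finite,field} mat"
  assumes A: "A \<in> carrier_mat r n"
  shows "card ((\<lambda>x. A *\<^sub>v x) ` carrier_vec n) = card (UNIV::'a set) ^ mat_rank A"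
proof -
  interpret vec_space "TYPE('a)" r .
  have cs: "col_space A = (\<lambda>x. A *\<^sub>v x) ` carrier_vec n"
    using col_space_eq[OF A] A by auto
  have sub: "set (cols A) \<subseteq> carrier_vec r" using A cols_dim by blast
  have "subspace class_ring (span (set (cols A))) V" by (rule span_is_subspace[OF sub])
  hence fs: "is_fsubspace r (col_space A)" unfolding is_fsubspace_def col_space_def by simp
  have "mat_rank A = fdim r (col_space A)"
    unfolding mat_rank_def fdim_def vec_space.rank_def col_space_def using A by simp
  then show ?thesis using card_fsub[OF fs] cs by simp
qed

lemma rank_case:
  fixes G1 M :: "'a::{finite,field} mat"
  assumes pr: "prime p" "CHAR('a) = p" "card (UNIV::'a set) = p ^ e" "1 \<le> e"
    and G1: "G1 \<in> carrier_mat k1 n" and C1: "C1 = {x. \<exists>y\<in>carrier_vec k1. x = transpose_mat G1 *\<^sub>v y}"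
    and cC1: "card C1 = card (UNIV::'a set) ^ k1"
    and M: "M \<in> carrier_mat r n" and rk: "mat_rank (G1 @\<^sub>r M) \<le> k1"
  shows "orth n C1 \<subseteq> {x \<in> carrier_vec n. M *\<^sub>v x = 0\<^sub>v r}"
proof -
  let ?q = "card (UNIV::'a set)"
  have "p > 1" using pr(1) prime_gt_1_nat by auto
  hence q1: "?q > 1" using pr(3,4) one_less_power[of p e] by simp
  define A where "A = G1 @\<^sub>r M"
  have Ac: "A \<in> carrier_mat (k1 + r) n" unfolding A_def using G1 M by auto
  define CS where "CS = (\<lambda>x. A *\<^sub>v x) ` carrier_vec n"
  define I1 where "I1 = (\<lambda>x. G1 *\<^sub>v x) ` carrier_vec n"
  have "card CS = ?q ^ mat_rank A" unfolding CS_def by (rule mat_rank_card[OF Ac])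
  also have "\<dots> \<le> ?q ^ k1" using rk q1 unfolding A_def by (intro power_increasing) auto
  finally have cCS: "card CS \<le> ?q ^ k1" .
  have GT: "transpose_mat G1 \<in> carrier_mat n k1" using G1 by simp
  have C1img: "C1 = (\<lambda>y. transpose_mat G1 *\<^sub>v y) ` carrier_vec k1" unfolding C1 by auto
  have c1: "card (carrier_vec k1 :: 'a vec set) = ?q ^ k1" by (rule card_carrier_vec)
  have c2: "card ((\<lambda>y. transpose_mat G1 *\<^sub>v y) ` (carrier_vec k1 :: 'a vec set)) = ?q ^ k1"
    using cC1 C1img by simp
  have injT: "inj_on (\<lambda>y. transpose_mat G1 *\<^sub>v y) (carrier_vec k1)"
    by (rule eq_card_imp_inj_on) (simp_all only: c1 c2 finite_carrier_vec)
  have orthI1: "orth k1 I1 = {0\<^sub>v k1}"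
  proof
    show "{0\<^sub>v k1} \<subseteq> orth k1 I1" unfolding orth_def I1_def using G1 by auto
    show "orth k1 I1 \<subseteq> {0\<^sub>v k1}"
    proof
      fix z assume z: "z \<in> orth k1 I1"
      have zc: "z \<in> carrier_vec k1" using z unfolding orth_def by auto
      have "\<forall>x\<in>carrier_vec n. (transpose_mat G1 *\<^sub>v z) \<bullet> x = 0"
      proof
        fix x :: "'a vec" assume x: "x \<in> carrier_vec n"
        have "(transpose_mat G1 *\<^sub>v z) \<bullet> x = z \<bullet> (G1 *\<^sub>v x)"
          by (rule transpose_vec_mult_scalar[OF G1 x zc])
        also have "\<dots> = (G1 *\<^sub>v x) \<bullet> z" using G1 x zc by (metis comm_scalar_prod mult_mat_vec_carrier)
        also have "\<dots> = 0" using z x unfolding orth_def I1_def by auto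
        finally show "(transpose_mat G1 *\<^sub>v z) \<bullet> x = 0" .
      qed
      hence "transpose_mat G1 *\<^sub>v z = 0\<^sub>v n" using GT zc by (intro unit_orth_zero) auto
      also have "\<dots> = transpose_mat G1 *\<^sub>v 0\<^sub>v k1" using mat_vec_zero[OF GT] by simp
      finally have "z = 0\<^sub>v k1" using injT zc by (meson inj_onD zero_carrier_vec)
      then show "z \<in> {0\<^sub>v k1}" by simp
    qed
  qed
  have cI1: "card I1 = ?q ^ k1"
    using card_orth[OF pr lsub_image_mat[OF G1]] orthI1 unfolding I1_def by simp
  have Aappend: "A *\<^sub>v x = (G1 *\<^sub>v x) @\<^sub>v (M *\<^sub>v x)" if "x \<in> carrier_vec n" for x
    unfolding A_def by (rule mat_mult_append[OF G1 M that])
  have proj: "vec_first (A *\<^sub>v x) k1 = G1 *\<^sub>v x" if "x \<in> carrier_vec n" for x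
    using Aappend[OF that] vec_first_append G1 that by (metis mult_mat_vec_carrier)
  have img: "(\<lambda>w. vec_first w k1) ` CS = I1"
    unfolding CS_def I1_def image_image using proj by (auto intro: image_eqI)
  have finCS: "finite CS" unfolding CS_def by simp
  have "card ((\<lambda>w. vec_first w k1) ` CS) = card CS"
    using img cI1 cCS card_image_le[OF finCS, of "\<lambda>w. vec_first w k1"] by simp
  hence injP: "inj_on (\<lambda>w. vec_first w k1) CS" by (rule eq_card_imp_inj_on[OF finCS])
  show ?thesis
  proof
    fix x assume x: "x \<in> orth n C1"
    have xc: "x \<in> carrier_vec n" using x unfolding orth_def by auto
    have "\<forall>y\<in>carrier_vec k1. (G1 *\<^sub>v x) \<bullet> y = 0"
    proof
      fix y :: "'a vec" assume y: "y \<in> carrier_vec k1"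
      have "(G1 *\<^sub>v x) \<bullet> y = y \<bullet> (G1 *\<^sub>v x)" using G1 xc y by (metis comm_scalar_prod mult_mat_vec_carrier)
      also have "\<dots> = (transpose_mat G1 *\<^sub>v y) \<bullet> x" by (rule transpose_vec_mult_scalar[OF G1 xc y, symmetric])
      also have "\<dots> = 0" using x y unfolding orth_def C1 by auto
      finally show "(G1 *\<^sub>v x) \<bullet> y = 0" .
    qed
    hence G1x: "G1 *\<^sub>v x = 0\<^sub>v k1" using G1 xc by (intro unit_orth_zero) auto
    have z: "A *\<^sub>v 0\<^sub>v n = 0\<^sub>v (k1 + r)" by (rule mat_vec_zero[OF Ac])
    have "vec_first (A *\<^sub>v x) k1 = vec_first (A *\<^sub>v 0\<^sub>v n) k1"
      using proj[OF xc] proj[of "0\<^sub>v n"] G1x mat_vec_zero[OF G1] by simp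
    moreover have "A *\<^sub>v x \<in> CS" "A *\<^sub>v 0\<^sub>v n \<in> CS" unfolding CS_def using xc by auto
    ultimately have "A *\<^sub>v x = A *\<^sub>v 0\<^sub>v n" using injP by (meson inj_onD)
    hence "(G1 *\<^sub>v x) @\<^sub>v (M *\<^sub>v x) = (G1 *\<^sub>v 0\<^sub>v n) @\<^sub>v (M *\<^sub>v 0\<^sub>v n)"
      using Aappend xc by simp
    hence "M *\<^sub>v x = M *\<^sub>v 0\<^sub>v n"
      using append_vec_eq[of "G1 *\<^sub>v x" k1 "G1 *\<^sub>v 0\<^sub>v n"] G1 xc by auto
    then show "x \<in> {x \<in> carrier_vec n. M *\<^sub>v x = 0\<^sub>v r}" using xc mat_vec_zero[OF M] by simp
  qed
qed

context qsetup begin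

lemma q_gt1: "card (UNIV :: 'a set) > 1"
proof -
  have "p > 1" using pr prime_gt_1_nat by auto
  then have "1 < p ^ e" using e1 by (intro one_less_power) auto
  then show ?thesis using cd by simp
qed

lemma lin_code_props:
  assumes "lin_code n k d (C :: 'a vec set)"
  shows "lsub n C" "card C = card (UNIV::'a set) ^ k" "k \<le> n"
    "\<forall>c\<in>C. c \<noteq> 0\<^sub>v n \<longrightarrow> d \<le> hweight c"
proof -
  have fs: "is_fsubspace n C" and fd: "fdim n C = k" using assms unfolding lin_code_def by auto
  show ls: "lsub n C" by (rule fsub_lsub[OF fs])
  show cC: "card C = card (UNIV::'a set) ^ k" using card_fsub[OF fs] fd by simp
  have "card C \<le> card (carrier_vec n :: 'a vec set)"
    using ls unfolding lsub_def by (intro card_mono) auto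
  hence "card (UNIV::'a set) ^ k \<le> card (UNIV::'a set) ^ n" using cC by (simp add: card_carrier_vec)
  then show "k \<le> n" by (rule power_le_imp_le_exp[OF q_gt1])
  show "\<forall>c\<in>C. c \<noteq> 0\<^sub>v n \<longrightarrow> d \<le> hweight c" using assms unfolding lin_code_def by auto
qed

lemma ta_zero[simp]: "ta 0 = 0" by (metis sg_zero ta_sg)
lemma vta_zero[simp]: "vta (0\<^sub>v m) = 0\<^sub>v m" by (intro eq_vecI) auto

lemma key:
  fixes C1 C2 :: "'a vec set" and G1 H2 :: "'a mat"
  assumes L1: "lin_code n k1 d1 C1" and L2: "lin_code n k2 d2 C2"
    and G1: "is_gen_matrix n k1 C1 G1" and H2: "is_pc_matrix n k2 C2 H2"
    and nk: "n \<le> k1 + k2"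
    and hyp: "mat_rank (G1 @\<^sub>r mat_epow H2 (p ^ (e - s))) \<le> k1
         \<or> (mat_rank (G1 * transpose_mat (mat_epow G2 (p ^ (e - s))))
              = k1 - fdim n (C1 \<inter> galois_dual p s n C2)
            \<and> k1 - fdim n (C1 \<inter> galois_dual p s n C2) \<le> k1 + k2 - n)"
  shows "galois_dual p s n C2 \<subseteq> C1" "lsub n (galois_dual p s n C2)"
    "card (galois_dual p s n C2) * card (UNIV::'a set) ^ k2 = card (UNIV::'a set) ^ n"
    "orth n (galois_dual p s n C2) = vsg ` C2"
proof -
  have pr4: "prime p" "CHAR('a) = p" "card (UNIV::'a set) = p ^ e" "1 \<le> e" using pr ch cd e1 by auto
  note P1 = lin_code_props[OF L1] and P2 = lin_code_props[OF L2]
  have C2c: "C2 \<subseteq> carrier_vec n" using P2(1) unfolding lsub_def by auto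
  let ?K = "vsg ` C2"
  let ?S = "galois_dual p s n C2"
  have lK: "lsub n ?K" by (rule lsub_vsg[OF P2(1)])
  have cK: "card ?K = card (UNIV::'a set) ^ k2" using card_vsg P2(2) by simp
  have S: "?S = orth n ?K" by (rule galois_dual_orth[OF C2c])
  have Kc: "?K \<subseteq> carrier_vec n" using lK unfolding lsub_def by auto
  show lS: "lsub n ?S" unfolding S by (rule orth_lsub[OF Kc])
  have "card ?K * card ?S = card (UNIV::'a set) ^ n" unfolding S by (rule card_orth[OF pr4 lK])
  then show cS: "card ?S * card (UNIV::'a set) ^ k2 = card (UNIV::'a set) ^ n" using cK by (simp add: mult.commute)
  show oS: "orth n ?S = ?K" unfolding S by (rule orth_orth[OF pr4 lK])
  have "?S \<subseteq> carrier_vec n" using lS unfolding lsub_def by auto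
  hence finS: "finite ?S" using finite_subset finite_carrier_vec by blast
  have cS': "card ?S = card (UNIV::'a set) ^ (n - k2)"
  proof -
    have "card (UNIV::'a set) ^ (n - k2) * card (UNIV::'a set) ^ k2 = card (UNIV::'a set) ^ n" using P2(3) by (simp flip: power_add)
    hence "card ?S * card (UNIV::'a set) ^ k2 = card (UNIV::'a set) ^ (n - k2) * card (UNIV::'a set) ^ k2" using cS by simp
    moreover have "card (UNIV::'a set) ^ k2 \<noteq> 0" using q_gt1 by simp
    ultimately show ?thesis by simp
  qed
  from hyp show "?S \<subseteq> C1"
  proof
    assume rk: "mat_rank (G1 @\<^sub>r mat_epow H2 (p ^ (e - s))) \<le> k1"
    have G1c: "G1 \<in> carrier_mat k1 n" and C1d: "C1 = {x. \<exists>y\<in>carrier_vec k1. x = transpose_mat G1 *\<^sub>v y}"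
      using G1 unfolding is_gen_matrix_def by auto
    have H2c: "H2 \<in> carrier_mat (n - k2) n" and C2d: "C2 = {x\<in>carrier_vec n. H2 *\<^sub>v x = 0\<^sub>v (n - k2)}"
      using H2 unfolding is_pc_matrix_def by auto
    have M: "map_mat sg H2 \<in> carrier_mat (n - k2) n" using H2c by simp
    have sub: "orth n C1 \<subseteq> {x \<in> carrier_vec n. map_mat sg H2 *\<^sub>v x = 0\<^sub>v (n - k2)}"
      by (rule rank_case[OF pr4 G1c C1d P1(2) M]) (use rk in \<open>simp add: sg_epow\<close>)
    have "{x \<in> carrier_vec n. map_mat sg H2 *\<^sub>v x = 0\<^sub>v (n - k2)} \<subseteq> ?K"
    proof
      fix x assume x: "x \<in> {x \<in> carrier_vec n. map_mat sg H2 *\<^sub>v x = 0\<^sub>v (n - k2)}"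
      hence xc: "x \<in> carrier_vec n" and "vsg (H2 *\<^sub>v vta x) = 0\<^sub>v (n - k2)"
        using sg_mat_mult[OF H2c] by auto
      hence "vta (vsg (H2 *\<^sub>v vta x)) = vta (0\<^sub>v (n - k2))" by simp
      hence "H2 *\<^sub>v vta x = 0\<^sub>v (n - k2)" by simp
      hence "vta x \<in> C2" using C2d xc by auto
      then show "x \<in> ?K" by (metis image_eqI vsg_vta)
    qed
    hence "orth n C1 \<subseteq> ?K" using sub by auto
    hence "orth n ?K \<subseteq> orth n (orth n C1)" by (rule orth_antimono)
    also have "orth n (orth n C1) = C1" by (rule orth_orth[OF pr4 P1(1)])
    finally show "?S \<subseteq> C1" unfolding S .
  next
    assume h: "mat_rank (G1 * transpose_mat (mat_epow G2 (p ^ (e - s))))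
              = k1 - fdim n (C1 \<inter> ?S) \<and> k1 - fdim n (C1 \<inter> ?S) \<le> k1 + k2 - n"
    hence f: "n - k2 \<le> fdim n (C1 \<inter> ?S)" using nk by linarith
    have lI: "lsub n (C1 \<inter> ?S)" by (rule lsub_inter[OF P1(1) lS])
    have "card (C1 \<inter> ?S) = card (UNIV::'a set) ^ fdim n (C1 \<inter> ?S)" by (rule card_fsub[OF lsub_fsub[OF lI]])
    also have "\<dots> \<ge> card (UNIV::'a set) ^ (n - k2)" using f q_gt1 by (intro power_increasing) auto
    finally have "card ?S \<le> card (C1 \<inter> ?S)" using cS' by simp
    hence "C1 \<inter> ?S = ?S" by (intro card_seteq[OF finS]) auto
    then show "?S \<subseteq> C1" by auto
  qed
qed

end

definition cosetf :: "'a::field vec set \<Rightarrow> 'a vec \<Rightarrow> 'a vec set" where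
  "cosetf S x = (\<lambda>t. x + t) ` S"
definition indf :: "'a vec set \<Rightarrow> ('a vec \<Rightarrow> complex)" where
  "indf T = (\<lambda>x. if x \<in> T then 1 else 0)"
definition QC :: "'a::field vec set \<Rightarrow> 'a vec set \<Rightarrow> ('a vec \<Rightarrow> complex) set" where
  "QC C S = {f. (\<forall>x. x \<notin> C \<longrightarrow> f x = 0) \<and> (\<forall>x\<in>C. \<forall>t\<in>S. f (x + t) = f x)}"

lemma sum_fun_apply: "(\<Sum>i\<in>A. f i) x = (\<Sum>i\<in>A. f i x)"
  for f :: "'b \<Rightarrow> 'c \<Rightarrow> 'd::comm_monoid_add"
  by (induct A rule: infinite_finite_induct) auto

lemma qscale_vs: "vector_space (qscale :: complex \<Rightarrow> ('a vec \<Rightarrow> complex) \<Rightarrow> _)"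
  by unfold_locales (auto simp: qscale_def fun_eq_iff algebra_simps)

context
  fixes n :: nat and C S :: "'a::{finite,field} vec set"
  assumes lC: "lsub n C" and lS: "lsub n S" and SC: "S \<subseteq> C"
begin

lemma Cc: "C \<subseteq> carrier_vec n" using lC unfolding lsub_def by auto
lemma Sc: "S \<subseteq> carrier_vec n" using lS unfolding lsub_def by auto

lemma coset_sub: "x \<in> C \<Longrightarrow> cosetf S x \<subseteq> C"
  unfolding cosetf_def using lC SC unfolding lsub_def by auto

lemma coset_self: "x \<in> C \<Longrightarrow> x \<in> cosetf S x"
  unfolding cosetf_def using lS Cc unfolding lsub_def
  by (intro image_eqI[of _ _ "0\<^sub>v n"]) auto

lemma coset_eq:
  assumes x: "x \<in> C" and y: "y \<in> cosetf S x"
  shows "cosetf S y = cosetf S x"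
proof -
  obtain t0 where t0: "t0 \<in> S" "y = x + t0" using y unfolding cosetf_def by auto
  have xc: "x \<in> carrier_vec n" using x Cc by auto
  have t0c: "t0 \<in> carrier_vec n" using t0 Sc by auto
  show ?thesis
  proof
    show "cosetf S y \<subseteq> cosetf S x"
    proof
      fix z assume "z \<in> cosetf S y"
      then obtain t where t: "t \<in> S" "z = y + t" unfolding cosetf_def by auto
      have tc: "t \<in> carrier_vec n" using t Sc by auto
      have "z = x + (t0 + t)" using t t0 xc t0c tc by simp
      moreover have "t0 + t \<in> S" using lS t t0 unfolding lsub_def by auto
      ultimately show "z \<in> cosetf S x" unfolding cosetf_def by auto
    qed
  next
    show "cosetf S x \<subseteq> cosetf S y"
    proof
      fix z assume "z \<in> cosetf S x"
      then obtain t where t: "t \<in> S" "z = x + t" unfolding cosetf_def by auto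
      have tc: "t \<in> carrier_vec n" using t Sc by auto
      have "z = y + (t - t0)" using t t0 xc t0c tc by (intro eq_vecI) auto
      moreover have "t - t0 \<in> S" using lsub_minus[OF lS t(1) t0(1)] .
      ultimately show "z \<in> cosetf S y" unfolding cosetf_def by auto
    qed
  qed
qed

lemma coset_disj:
  assumes "x \<in> C" "y \<in> C" "z \<in> cosetf S x" "z \<in> cosetf S y"
  shows "cosetf S x = cosetf S y"
  using coset_eq[OF assms(1,3)] coset_eq[OF assms(2,4)] by simp

lemma coset_card: "x \<in> C \<Longrightarrow> card (cosetf S x) = card S"
  unfolding cosetf_def
proof (rule card_image, rule inj_onI)
  fix a b assume x: "x \<in> C" and a: "a \<in> S" and b: "b \<in> S" and eq: "x + a = x + b"
  have xc: "x \<in> carrier_vec n" "a \<in> carrier_vec n" "b \<in> carrier_vec n" using x a b Cc Sc by auto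
  show "a = b"
  proof (rule eq_vecI)
    fix i assume "i < dim_vec b"
    hence "(x + a) $ i = (x + b) $ i" using eq by simp
    then show "a $ i = b $ i" using xc \<open>i < dim_vec b\<close> by simp
  qed (use xc in auto)
qed

lemma finC: "finite C" using finite_subset[OF Cc finite_carrier_vec] .

lemma card_cosets: "card (cosetf S ` C) * card S = card C"
proof -
  have U: "\<Union>(cosetf S ` C) = C" using coset_sub coset_self by blast
  have "card (\<Union>(cosetf S ` C)) = sum card (cosetf S ` C)"
  proof (rule card_Union_disjoint)
    show "pairwise disjnt (cosetf S ` C)"
      unfolding pairwise_def disjnt_def
    proof (intro ballI impI)
      fix A B assume A: "A \<in> cosetf S ` C" and B: "B \<in> cosetf S ` C" and AB: "A \<noteq> B"
      obtain x y where xy: "x \<in> C" "y \<in> C" "A = cosetf S x" "B = cosetf S y" using A B by auto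
      show "A \<inter> B = {}"
      proof (rule ccontr)
        assume "A \<inter> B \<noteq> {}"
        then obtain z where "z \<in> A" "z \<in> B" by auto
        then show False using coset_disj[OF xy(1,2)] xy AB by auto
      qed
    qed
    show "\<And>A. A \<in> cosetf S ` C \<Longrightarrow> finite A"
    proof -
      fix A assume "A \<in> cosetf S ` C"
      then obtain x where "x \<in> C" "A = cosetf S x" by auto
      then show "finite A" using finite_subset[OF coset_sub finC] by simp
    qed
  qed
  also have "\<dots> = (\<Sum>A\<in>cosetf S ` C. card S)" by (rule sum.cong) (auto simp: coset_card)
  also have "\<dots> = card (cosetf S ` C) * card S" by simp
  finally show ?thesis using U by simp
qed

lemma QC_const: "f \<in> QC C S \<Longrightarrow> x \<in> C \<Longrightarrow> y \<in> cosetf S x \<Longrightarrow> f y = f x"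
  unfolding QC_def cosetf_def by auto

lemma indf_inj: "inj_on indf (cosetf S ` C)"
proof (rule inj_onI)
  fix A B assume "indf A = indf B"
  hence "\<And>x. (x \<in> A) = (x \<in> B)" unfolding indf_def by (metis one_neq_zero)
  then show "A = B" by auto
qed

lemma QC_subspace: "Modules.module.subspace qscale (QC C S)"
proof -
  interpret V: vector_space "qscale :: complex \<Rightarrow> ('a vec \<Rightarrow> complex) \<Rightarrow> _" by (rule qscale_vs)
  show ?thesis unfolding V.subspace_def QC_def qscale_def by auto
qed

lemma QC_dim: "Vector_Spaces.vector_space.dim qscale (QC C S) = card (cosetf S ` C)"
proof -
  interpret V: vector_space "qscale :: complex \<Rightarrow> ('a vec \<Rightarrow> complex) \<Rightarrow> _" by (rule qscale_vs)
  let ?B = "indf ` cosetf S ` C"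
  have BQ: "?B \<subseteq> QC C S"
  proof
    fix g assume "g \<in> ?B"
    then obtain x where x: "x \<in> C" "g = indf (cosetf S x)" by auto
    show "g \<in> QC C S" unfolding QC_def
    proof (intro CollectI conjI allI impI ballI)
      fix y assume "y \<notin> C" then show "g y = 0" using x coset_sub unfolding indf_def by auto
    next
      fix y t assume y: "y \<in> C" and t: "t \<in> S"
      have "y + t \<in> cosetf S y" unfolding cosetf_def using t by auto
      hence "cosetf S (y + t) = cosetf S y" using coset_eq y by blast
      have "y + t \<in> cosetf S x \<longleftrightarrow> y \<in> cosetf S x"
      proof
        assume "y + t \<in> cosetf S x"
        hence "cosetf S (y + t) = cosetf S x" using coset_eq x(1) by blast
        then show "y \<in> cosetf S x" using coset_self[OF y] \<open>cosetf S (y + t) = cosetf S y\<close> by simp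
      next
        assume "y \<in> cosetf S x"
        hence "cosetf S y = cosetf S x" using coset_eq x(1) by blast
        then show "y + t \<in> cosetf S x" using \<open>y + t \<in> cosetf S y\<close> by simp
      qed
      then show "g (y + t) = g y" using x unfolding indf_def by simp
    qed
  qed
  have finB: "finite ?B" using finC by simp
  have QB: "QC C S \<subseteq> V.span ?B"
  proof
    fix f assume f: "f \<in> QC C S"
    define rep where "rep T = (SOME x. x \<in> T)" for T :: "'a vec set"
    have "f = (\<Sum>T\<in>cosetf S ` C. qscale (f (rep T)) (indf T))"
    proof
      fix y
      have "(\<Sum>T\<in>cosetf S ` C. qscale (f (rep T)) (indf T)) y
          = (\<Sum>T\<in>cosetf S ` C. f (rep T) * indf T y)"
        by (simp add: sum_fun_apply qscale_def)
      also have "\<dots> = f y"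
      proof (cases "y \<in> C")
        case False
        then have "\<And>T. T \<in> cosetf S ` C \<Longrightarrow> indf T y = 0"
          using coset_sub unfolding indf_def by auto
        then show ?thesis using f False unfolding QC_def by simp
      next
        case True
        have "(\<Sum>T\<in>cosetf S ` C. f (rep T) * indf T y) = (\<Sum>T\<in>{cosetf S y}. f (rep T) * indf T y)"
        proof (rule sum.mono_neutral_right)
          show "finite (cosetf S ` C)" using finC by simp
          show "{cosetf S y} \<subseteq> cosetf S ` C" using True by auto
          show "\<forall>T\<in>cosetf S ` C - {cosetf S y}. f (rep T) * indf T y = 0"
          proof
            fix T assume T: "T \<in> cosetf S ` C - {cosetf S y}"
            then obtain x where x: "x \<in> C" "T = cosetf S x" by auto
            have "y \<notin> T" using T x coset_disj[OF x(1) True _ coset_self[OF True]] by auto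
            then show "f (rep T) * indf T y = 0" unfolding indf_def by simp
          qed
        qed
        also have "\<dots> = f (rep (cosetf S y))" using coset_self[OF True] unfolding indf_def by simp
        also have "\<dots> = f y"
        proof -
          have "rep (cosetf S y) \<in> cosetf S y"
            unfolding rep_def using coset_self[OF True] by (metis someI_ex)
          then show ?thesis using QC_const[OF f True] by simp
        qed
        finally show ?thesis .
      qed
      finally show "f y = (\<Sum>T\<in>cosetf S ` C. qscale (f (rep T)) (indf T)) y" by simp
    qed
    also have "\<dots> \<in> V.span ?B"
      by (intro V.span_sum V.span_scale V.span_base) auto
    finally show "f \<in> V.span ?B" .
  qed
  have spB: "V.span ?B = QC C S"
    by (rule V.span_subspace[OF BQ QB QC_subspace])
  have spQ: "V.span (QC C S) = QC C S" using QC_subspace V.span_eq_iff by blast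
  have indep: "V.independent ?B"
    unfolding V.independent_explicit_module
  proof (intro allI impI)
    fix t u g assume t: "finite t" "t \<subseteq> ?B" and s: "(\<Sum>v\<in>t. qscale (u v) v) = 0" and g: "g \<in> t"
    obtain x where x: "x \<in> C" "g = indf (cosetf S x)" using g t by auto
    have "0 = (\<Sum>v\<in>t. qscale (u v) v) x" using s by simp
    also have "\<dots> = (\<Sum>v\<in>t. u v * v x)" by (simp add: sum_fun_apply qscale_def)
    also have "\<dots> = (\<Sum>v\<in>{g}. u v * v x)"
    proof (rule sum.mono_neutral_right[OF t(1)])
      show "{g} \<subseteq> t" using g by auto
      show "\<forall>v\<in>t - {g}. u v * v x = 0"
      proof
        fix v assume v: "v \<in> t - {g}"
        then obtain y where y: "y \<in> C" "v = indf (cosetf S y)" using t by auto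
        have "cosetf S y \<noteq> cosetf S x" using v x y by auto
        hence "x \<notin> cosetf S y" using coset_disj[OF y(1) x(1) _ coset_self[OF x(1)]] by auto
        then show "u v * v x = 0" using y unfolding indf_def by simp
      qed
    qed
    also have "\<dots> = u g" using x coset_self[OF x(1)] unfolding indf_def by simp
    finally show "u g = 0" by simp
  qed
  have "V.dim (QC C S) = card ?B"
    by (rule V.dim_eq_card[OF _ indep]) (simp only: spB spQ)
  also have "card ?B = card (cosetf S ` C)" by (rule card_image[OF indf_inj])
  finally show ?thesis .
qed

end

lemma hweight_le_err:
  assumes "a \<in> carrier_vec n"
  shows "hweight a \<le> err_weight n a b" "hweight a \<le> err_weight n b a"
proof -
  have "{i. i < dim_vec a \<and> a $ i \<noteq> 0} \<subseteq> {i. i < n \<and> (a $ i \<noteq> 0 \<or> b $ i \<noteq> 0)}"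
    "{i. i < dim_vec a \<and> a $ i \<noteq> 0} \<subseteq> {i. i < n \<and> (b $ i \<noteq> 0 \<or> a $ i \<noteq> 0)}"
    using assms by auto
  then show "hweight a \<le> err_weight n a b" "hweight a \<le> err_weight n b a"
    unfolding hweight_def err_weight_def by (auto intro: card_mono)
qed

lemma hweight_pos:
  assumes "x \<in> carrier_vec n" "x \<noteq> 0\<^sub>v n"
  shows "1 \<le> hweight x"
proof -
  obtain i where i: "i < n" "x $ i \<noteq> 0"
  proof (rule ccontr)
    assume "\<not> thesis"
    then have "\<forall>i<n. x $ i = 0" using that by blast
    then have "x = 0\<^sub>v n" using assms by (intro eq_vecI) auto
    then show False using assms by simp
  qed
  have "i \<in> {i. i < dim_vec x \<and> x $ i \<noteq> 0}" using i assms by auto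
  moreover have "finite {i. i < dim_vec x \<and> x $ i \<noteq> 0}" by simp
  ultimately have "card {i. i < dim_vec x \<and> x $ i \<noteq> 0} > 0" using card_gt_0_iff by blast
  then show ?thesis unfolding hweight_def by simp
qed

lemma err_weight_00: "err_weight n (0\<^sub>v n) (0\<^sub>v n) = 0"
  unfolding err_weight_def by simp

lemma QC_shift:
  assumes lC: "lsub n C" and lS: "lsub n S" and SC: "S \<subseteq> C" and f: "f \<in> QC C S"
    and w: "w \<in> S" and y: "y \<in> carrier_vec n"
  shows "f (y + w) = f y"
proof (cases "y \<in> C")
  case True then show ?thesis using f w unfolding QC_def by auto
next
  case False
  have wc: "w \<in> carrier_vec n" using lS w unfolding lsub_def by auto
  have "y + w \<notin> C"
  proof
    assume yw: "y + w \<in> C"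
    have "y + w - w \<in> C" using lsub_minus[OF lC yw] w SC by auto
    moreover have "y + w - w = y" using y wc by (rule vec_add_minus_cancel)
    ultimately show False using False by simp
  qed
  then show ?thesis using False f unfolding QC_def by auto
qed

context qsetup begin

lemma err_analysis:
  fixes C1 C2 S :: "'a vec set" and u v :: "'a vec \<Rightarrow> complex"
  assumes lC: "lsub n C1" and lS: "lsub n S" and SC: "S \<subseteq> C1"
    and oS: "orth n S = vsg ` C2"
    and w1: "\<forall>c\<in>C1. c \<noteq> 0\<^sub>v n \<longrightarrow> d1 \<le> hweight c"
    and w2: "\<forall>c\<in>C2. c \<noteq> 0\<^sub>v n \<longrightarrow> d2 \<le> hweight c"
    and u: "u \<in> QC C1 S" and v: "v \<in> QC C1 S"
    and a: "a \<in> carrier_vec n" and b: "b \<in> carrier_vec n"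
    and wt: "err_weight n a b \<le> min d1 d2 - 1"
  shows "qinner n u (err_apply p e n c a b v)
         = (if a = 0\<^sub>v n \<and> b = 0\<^sub>v n then cis (2 * pi * real c / real p) * qinner n u v else 0)"
proof -
  have pr4: "prime p" "CHAR('a) = p" "card (UNIV::'a set) = p ^ e" "1 \<le> e" using pr ch cd e1 by auto
  let ?cs = "cis (2 * pi * real c / real p)"
  have C1c: "C1 \<subseteq> carrier_vec n" using lC unfolding lsub_def by auto
  have Sc: "S \<subseteq> carrier_vec n" using lS unfolding lsub_def by auto
  have uz: "y \<notin> C1 \<Longrightarrow> u y = 0" for y using u unfolding QC_def by auto
  have vz: "y \<notin> C1 \<Longrightarrow> v y = 0" for y using v unfolding QC_def by auto
  have Ev: "err_apply p e n c a b v y = ?cs * chi p e (b \<bullet> (y - a)) * v (y - a)"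
    if "y \<in> carrier_vec n" for y using that unfolding err_apply_def by simp
  show ?thesis
  proof (cases "a = 0\<^sub>v n")
    case False
    have "a \<notin> C1"
    proof
      assume "a \<in> C1"
      hence "d1 \<le> hweight a" using w1 False by auto
      moreover have "1 \<le> hweight a" by (rule hweight_pos[OF a False])
      moreover have "hweight a \<le> err_weight n a b" by (rule hweight_le_err(1)[OF a])
      ultimately show False using wt by linarith
    qed
    have "qinner n u (err_apply p e n c a b v) = 0"
      unfolding qinner_def
    proof (rule sum.neutral, intro ballI)
      fix y :: "'a vec" assume y: "y \<in> carrier_vec n"
      show "cnj (u y) * err_apply p e n c a b v y = 0"
      proof (cases "y \<in> C1 \<and> y - a \<in> C1")
        case True
        have "y - (y - a) \<in> C1" using lsub_minus[OF lC] True by auto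
        moreover have "y - (y - a) = a" using y a by (intro eq_vecI) auto
        ultimately show ?thesis using \<open>a \<notin> C1\<close> by simp
      next
        case False
        then show ?thesis using uz vz Ev[OF y] by auto
      qed
    qed
    then show ?thesis using False by simp
  next
    case a0: True
    have Ev0: "err_apply p e n c a b v y = ?cs * chi p e (b \<bullet> y) * v y"
      if "y \<in> carrier_vec n" for y using Ev[OF that] that a0 by simp
    show ?thesis
    proof (cases "b = 0\<^sub>v n")
      case True
      have "qinner n u (err_apply p e n c a b v) = (\<Sum>y\<in>carrier_vec n. ?cs * (cnj (u y) * v y))"
        unfolding qinner_def
      proof (intro sum.cong refl)
        fix y :: "'a vec" assume y: "y \<in> carrier_vec n"
        have "b \<bullet> y = 0" using True y by simp
        then show "cnj (u y) * err_apply p e n c a b v y = ?cs * (cnj (u y) * v y)"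
          using Ev0[OF y] chi_zero[OF pr4(1-3)] by simp
      qed
      also have "\<dots> = ?cs * qinner n u v" unfolding qinner_def by (simp add: sum_distrib_left)
      finally show ?thesis using True a0 by simp
    next
      case False
      have "b \<notin> vsg ` C2"
      proof
        assume "b \<in> vsg ` C2"
        then obtain c2 where c2: "c2 \<in> C2" "b = vsg c2" by auto
        have "c2 \<noteq> 0\<^sub>v n" using c2 False vsg_zero by auto
        hence "d2 \<le> hweight c2" using w2 c2 by auto
        hence "d2 \<le> hweight b" using c2 hweight_vsg by simp
        moreover have "1 \<le> hweight b" by (rule hweight_pos[OF b False])
        moreover have "hweight b \<le> err_weight n a b" by (rule hweight_le_err(2)[OF b])
        ultimately show False using wt by linarith
      qed
      hence "b \<notin> orth n S" using oS by simp
      then obtain t0 where t0: "t0 \<in> S" "t0 \<bullet> b \<noteq> 0" using b unfolding orth_def by auto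
      have t0c: "t0 \<in> carrier_vec n" using t0 Sc by auto
      have bt0: "b \<bullet> t0 \<noteq> 0" using t0 comm_scalar_prod[OF b t0c] by simp
      obtain t :: 'a where t: "chi p e t \<noteq> 1" using chi_nontrivial[OF pr4] by blast
      define w0 where "w0 = (t / (b \<bullet> t0)) \<cdot>\<^sub>v t0"
      have w0S: "w0 \<in> S" using lS t0 unfolding lsub_def w0_def by auto
      have w0c: "w0 \<in> carrier_vec n" using w0S Sc by auto
      have bw0: "b \<bullet> w0 = t" unfolding w0_def using b t0c bt0 by (subst scalar_prod_smult_right) auto
      define g where "g y = cnj (u y) * v y * chi p e (b \<bullet> y)" for y
      let ?T = "\<Sum>y\<in>carrier_vec n. g y"
      have "?T = (\<Sum>y\<in>carrier_vec n. g (y + w0))"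
      proof (rule sum.reindex_bij_witness[of _ "\<lambda>x. x + w0" "\<lambda>x. x - w0"])
        fix x :: "'a vec" assume x: "x \<in> carrier_vec n"
        show "x - w0 + w0 = x" using x w0c by (rule vec_minus_add_cancel)
        show "x - w0 \<in> carrier_vec n" using x w0c by simp
        show "g (x - w0 + w0) = g x" using x w0c vec_minus_add_cancel by metis
        show "x + w0 - w0 = x" using x w0c by (rule vec_add_minus_cancel)
        show "x + w0 \<in> carrier_vec n" using x w0c by simp
      qed
      also have "\<dots> = (\<Sum>y\<in>carrier_vec n. g y * chi p e t)"
      proof (rule sum.cong[OF refl])
        fix y :: "'a vec" assume y: "y \<in> carrier_vec n"
        have "b \<bullet> (y + w0) = b \<bullet> y + t" using scalar_prod_add_distrib[OF b y w0c] bw0 by simp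
        moreover have "u (y + w0) = u y" by (rule QC_shift[OF lC lS SC u w0S y])
        moreover have "v (y + w0) = v y" by (rule QC_shift[OF lC lS SC v w0S y])
        ultimately show "g (y + w0) = g y * chi p e t"
          unfolding g_def using chi_add[OF pr4(1-3)] by simp
      qed
      also have "\<dots> = ?T * chi p e t" by (simp add: sum_distrib_right)
      finally have "?T * (1 - chi p e t) = 0" by (simp add: algebra_simps)
      hence T0: "?T = 0" using t by simp
      have "qinner n u (err_apply p e n c a b v) = ?cs * ?T"
        unfolding qinner_def g_def sum_distrib_left
        by (intro sum.cong refl) (simp add: Ev0)
      then show ?thesis using T0 False by simp
    qed
  qed
qed

end

theorem theorem2p6:
  fixes C1 C2 :: "'a::{finite,field} vec set"
    and G1 G2 H1 H2 :: "'a mat"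
    and p e s n k1 k2 d1 d2 :: nat
  assumes "prime p" and "CHAR('a) = p" and "card (UNIV :: 'a set) = p ^ e" and "1 \<le> e" and "s < e"
    and "lin_code n k1 d1 C1" and "lin_code n k2 d2 C2"
    and "is_gen_matrix n k1 C1 G1" and "is_pc_matrix n k1 C1 H1"
    and "is_gen_matrix n k2 C2 G2" and "is_pc_matrix n k2 C2 H2"
    and "n \<le> k1 + k2"
    and "mat_rank (G1 @\<^sub>r mat_epow H2 (p ^ (e - s))) \<le> k1
         \<or> (mat_rank (G1 * transpose_mat (mat_epow G2 (p ^ (e - s))))
              = k1 - fdim n (C1 \<inter> galois_dual p s n C2)
            \<and> k1 - fdim n (C1 \<inter> galois_dual p s n C2) \<le> k1 + k2 - n)"
  shows "\<exists>(Q :: ('a vec \<Rightarrow> complex) set) d.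
           quantum_code p e n (k1 + k2 - n) d Q \<and> min d1 d2 \<le> d"
proof -
  interpret qsetup p e s "TYPE('a)"
    by unfold_locales (use assms(1-5) in auto)
  let ?S = "galois_dual p s n C2"
  let ?q = "card (UNIV :: 'a set)"
  note K = key[OF assms(6,7,8,11,12,13)]
  note P1 = lin_code_props[OF assms(6)] and P2 = lin_code_props[OF assms(7)]
  define Q where "Q = QC C1 ?S"
  define d where "d = min d1 d2"
  have C1c: "C1 \<subseteq> carrier_vec n" using P1(1) unfolding lsub_def by auto
  have Qst: "Q \<subseteq> states n"
    unfolding Q_def QC_def states_def using C1c by auto
  have Qsub: "Modules.module.subspace qscale Q"
    unfolding Q_def by (rule QC_subspace[OF P1(1) K(2) K(1)])
  have cardCO: "card (cosetf ?S ` C1) = ?q ^ (k1 + k2 - n)"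
  proof -
    have a: "card (cosetf ?S ` C1) * card ?S = ?q ^ k1"
      using card_cosets[OF P1(1) K(2) K(1)] P1(2) by simp
    have "card (cosetf ?S ` C1) * ?q ^ n = card (cosetf ?S ` C1) * (card ?S * ?q ^ k2)"
      using K(3) by simp
    also have "\<dots> = ?q ^ k1 * ?q ^ k2" using a by (simp add: mult.assoc[symmetric])
    also have "\<dots> = ?q ^ (k1 + k2 - n) * ?q ^ n" using assms(12) by (simp flip: power_add)
    finally have "card (cosetf ?S ` C1) * ?q ^ n = ?q ^ (k1 + k2 - n) * ?q ^ n" .
    moreover have "?q ^ n \<noteq> 0" using q_gt1 by simp
    ultimately show ?thesis by simp
  qed
  have Qdim: "Vector_Spaces.vector_space.dim qscale Q = ?q ^ (k1 + k2 - n)"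
    unfolding Q_def QC_dim[OF P1(1) K(2) K(1)] cardCO ..
  have C2c: "C2 \<subseteq> carrier_vec n" using P2(1) unfolding lsub_def by auto
  have E: "qinner n u (err_apply p e n c a b v)
         = (if a = 0\<^sub>v n \<and> b = 0\<^sub>v n then cis (2 * pi * real c / real p) * qinner n u v else 0)"
    if "u \<in> Q" "v \<in> Q" "a \<in> carrier_vec n" "b \<in> carrier_vec n" "err_weight n a b \<le> d - 1" for u v a b c
    using err_analysis[OF P1(1) K(2) K(1) K(4) P1(4) P2(4)] that unfolding Q_def d_def by blast
  have "quantum_code p e n (k1 + k2 - n) d Q"
    unfolding quantum_code_def
  proof (intro conjI Qst Qsub Qdim)
    show "if k1 + k2 - n = 0
      then \<forall>v\<in>Q. \<forall>c a b. a \<in> carrier_vec n \<longrightarrow> b \<in> carrier_vec n \<longrightarrow>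
            1 \<le> err_weight n a b \<longrightarrow> err_weight n a b \<le> d - 1 \<longrightarrow>
            qinner n v (err_apply p e n c a b v) = 0
      else \<forall>u\<in>Q. \<forall>v\<in>Q. qinner n u v = 0 \<longrightarrow> (\<forall>c a b. a \<in> carrier_vec n \<longrightarrow> b \<in> carrier_vec n \<longrightarrow>
            err_weight n a b \<le> d - 1 \<longrightarrow> qinner n u (err_apply p e n c a b v) = 0)"
    proof -
      have 1: "\<forall>v\<in>Q. \<forall>c a b. a \<in> carrier_vec n \<longrightarrow> b \<in> carrier_vec n \<longrightarrow>
            1 \<le> err_weight n a b \<longrightarrow> err_weight n a b \<le> d - 1 \<longrightarrow>
            qinner n v (err_apply p e n c a b v) = 0"
      proof (intro ballI allI impI)
        fix v :: "'a vec \<Rightarrow> complex" and c :: nat and a b :: "'a vec" assume h: "v \<in> Q" "a \<in> carrier_vec n" "b \<in> carrier_vec n"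
          "1 \<le> err_weight n a b" "err_weight n a b \<le> d - 1"
        have nz: "\<not> (a = 0\<^sub>v n \<and> b = 0\<^sub>v n)"
        proof
          assume ab: "a = 0\<^sub>v n \<and> b = 0\<^sub>v n"
          have "err_weight n a b = 0" unfolding err_weight_def using ab by simp
          then show False using h(4) by simp
        qed
        then show "qinner n v (err_apply p e n c a b v) = 0" by (subst E[OF h(1) h(1) h(2,3,5)]) (rule if_not_P[OF nz])
      qed
      have 2: "\<forall>u\<in>Q. \<forall>v\<in>Q. qinner n u v = 0 \<longrightarrow> (\<forall>c a b. a \<in> carrier_vec n \<longrightarrow> b \<in> carrier_vec n \<longrightarrow>
            err_weight n a b \<le> d - 1 \<longrightarrow> qinner n u (err_apply p e n c a b v) = 0)"
      proof (intro ballI allI impI)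
        fix u v :: "'a vec \<Rightarrow> complex" and c :: nat and a b :: "'a vec" assume h: "u \<in> Q" "v \<in> Q" "qinner n u v = 0" "a \<in> carrier_vec n" "b \<in> carrier_vec n"
          "err_weight n a b \<le> d - 1"
        show "qinner n u (err_apply p e n c a b v) = 0" using E[OF h(1,2,4,5,6)] h(3) by simp
      qed
      show ?thesis using 1 2 by simp
    qed
  qed
  then show ?thesis unfolding d_def by blast
qed

end
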